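(* Let $U \in \mathbb{R}^{m \times d_1}$ and $V \in \mathbb{R}^{n \times d_2}$. Let $\rho$ be a $G$-optimal design for the vectors $\{U^\top \mathbf{e}_i : i \in [m]\}$ and let $\zeta$ be a $G$-optimal design for the vectors $\{V^\top \mathbf{e}_j : j \in [n]\}$. Define the distribution $\pi$ on $[m] \times [n]$ by $\pi(i,j) = \rho(i)\,\zeta(j)$. Then $\pi$ is a $G$-optimal design for the vectors $\{V^\top \mathbf{e}_j \otimes U^\top \mathbf{e}_i : i \in [m],\ j \in [n]\}$.
   Context: $\mathbf{e}_i$ denotes the $i$-th standard basis vector and $\otimes$ the Kronecker (tensor) product. For a finite set $\mathcal{A} \subset \mathbb{R}^k$ (here indexed by row indices, column indices, or pairs of them) and a probability distribution $\pi : \mathcal{A} \to [0,1]$, the $G$-value of $\pi$ is $$g(\pi) := \max_{\mathbf{a} \in \mathcal{A}} \Big[\mathbf{a}^\top \Big(\sum_{\mathbf{a}' \in \mathcal{A}} \pi(\mathbf{a}')\, \mathbf{a}' \mathbf{a}'^\top\Big)^{-1} \mathbf{a}\Big].$$ A distribution $\hat\pi$ is called a $G$-optimal design for $\mathcal{A}$ if $g(\hat\pi) = \inf_{\pi} g(\pi)$, the infimum being over all probability distributions on $\mathcal{A}$. *)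

theory Defs
  imports "HOL-Analysis.Analysis" "HOL-Library.Extended_Real"
begin

definition is_distribution :: "('i::finite \<Rightarrow> real) \<Rightarrow> bool" where
  "is_distribution p \<longleftrightarrow> (\<forall>i. 0 \<le> p i) \<and> (\<Sum>i\<in>UNIV. p i) = 1"

definition outer :: "real^'d \<Rightarrow> real^'d \<Rightarrow> real^'d^'d" where
  "outer x y = (\<chi> k l. x $ k * y $ l)"

definition info_matrix :: "('i::finite \<Rightarrow> real^'d) \<Rightarrow> ('i \<Rightarrow> real) \<Rightarrow> real^'d^'d" where
  "info_matrix a p = (\<Sum>i\<in>UNIV. p i *\<^sub>R outer (a i) (a i))"

text \<open>G-value; when the information matrix is singular the inverse does not exist and
  the value is taken to be +infinity.\<close>
definition g_value :: "('i::finite \<Rightarrow> real^'d) \<Rightarrow> ('i \<Rightarrow> real) \<Rightarrow> ereal" where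
  "g_value a p =
     (if invertible (info_matrix a p)
      then ereal (Max (range (\<lambda>i. a i \<bullet> (matrix_inv (info_matrix a p) *v a i))))
      else \<infinity>)"

definition G_optimal :: "('i::finite \<Rightarrow> real^'d) \<Rightarrow> ('i \<Rightarrow> real) \<Rightarrow> bool" where
  "G_optimal a p \<longleftrightarrow> is_distribution p \<and>
     g_value a p = (INF q \<in> {q. is_distribution q}. g_value a q)"

definition kron :: "real^'a \<Rightarrow> real^'b \<Rightarrow> real^('a \<times> 'b)" where
  "kron x y = (\<chi> p. x $ fst p * y $ snd p)"

end

theory Submission
  imports Defs
begin

lemma info_entry: "info_matrix a p $ k $ l = (\<Sum>i\<in>UNIV. p i * (a i $ k * a i $ l))"
  unfolding info_matrix_def outer_def by (simp add: sum_component)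

lemma info_mulv: "info_matrix a p *v y = (\<Sum>i\<in>UNIV. (p i * (a i \<bullet> y)) *\<^sub>R a i)"
proof -
  have "(\<Sum>l\<in>UNIV. (\<Sum>i\<in>UNIV. p i * (a i$k * a i$l)) * y$l) = (\<Sum>i\<in>UNIV. \<Sum>l\<in>UNIV. p i * (a i $ l * y $ l) * a i $ k)" for k
    by (subst sum.swap) (simp only: sum_distrib_right, intro sum.cong refl, simp add: mult_ac)
  then show ?thesis
    by (simp add: vec_eq_iff matrix_vector_mult_def info_entry inner_vec_def sum_component sum_distrib_right sum_distrib_left)
qed
lemma trace_id:
  fixes a :: "'i::finite \<Rightarrow> real^'d"
  assumes "(matrix_inv (info_matrix a p)) ** (info_matrix a p) = mat 1"
  shows "(\<Sum>i\<in>UNIV. p i * (a i \<bullet> (matrix_inv (info_matrix a p) *v a i))) = real CARD('d)"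
proof -
  let ?M = "info_matrix a p" let ?N = "matrix_inv ?M"
  have "(\<Sum>i\<in>UNIV. p i * (a i \<bullet> (?N *v a i)))
      = (\<Sum>i\<in>UNIV. \<Sum>k\<in>UNIV. \<Sum>l\<in>UNIV. ?N$k$l * (p i * (a i $ l * a i $ k)))"
    by (simp add: inner_vec_def matrix_vector_mult_def sum_distrib_left algebra_simps)
  also have "\<dots> = (\<Sum>k\<in>UNIV. \<Sum>i\<in>UNIV. \<Sum>l\<in>UNIV. ?N$k$l * (p i * (a i $ l * a i $ k)))"
    by (rule sum.swap)
  also have "\<dots> = (\<Sum>k\<in>UNIV. \<Sum>l\<in>UNIV. \<Sum>i\<in>UNIV. ?N$k$l * (p i * (a i $ l * a i $ k)))"
    by (intro sum.cong refl sum.swap)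
  also have "\<dots> = (\<Sum>k\<in>UNIV. (?N ** ?M)$k$k)"
    by (simp add: matrix_matrix_mult_def info_entry sum_distrib_left)
  also have "\<dots> = real CARD('d)" using assms by (simp add: mat_def)
  finally show ?thesis .
qed

lemma minv:
  fixes A :: "real^'n^'n"
  assumes "invertible A"
  shows "A ** matrix_inv A = mat 1" "matrix_inv A ** A = mat 1"
  using someI_ex[OF assms[unfolded invertible_def]] unfolding matrix_inv_def by auto

lemma info_transpose: "transpose (info_matrix a p) = info_matrix a p"
  by (simp add: vec_eq_iff transpose_def info_entry mult.commute mult.left_commute)

lemma info_quad: "y \<bullet> (info_matrix a p *v y) = (\<Sum>i\<in>UNIV. p i * (a i \<bullet> y)^2)"
  unfolding info_mulv inner_sum_right
  by (simp add: power2_eq_square inner_commute algebra_simps)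

lemma inv_quad_nonneg:
  assumes "\<And>i. 0 \<le> p i" "invertible (info_matrix a p)"
  shows "0 \<le> x \<bullet> (matrix_inv (info_matrix a p) *v x)"
proof -
  let ?M = "info_matrix a p"
  define y where "y = matrix_inv ?M *v x"
  have "?M *v y = x" using minv(1)[OF assms(2)] by (simp add: y_def matrix_vector_mul_assoc)
  then have "x \<bullet> (matrix_inv ?M *v x) = y \<bullet> (?M *v y)" by (simp add: y_def inner_commute)
  also have "\<dots> \<ge> 0" unfolding info_quad using assms(1) by (intro sum_nonneg) auto
  finally show ?thesis .
qed


lemma det_rank1_aux:
  fixes A :: "real^'n^'n"
  assumes "finite S" "k \<notin> S"
  shows "det (\<chi> i. if i = k then b else if i \<in> S then row i A + c$i *s b else row i A)
       = det (\<chi> i. if i = k then b else row i A)"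
  using assms
proof (induction S rule: finite_induct)
  case empty then show ?case by (auto intro!: arg_cong[where f=det] simp: vec_eq_iff)
next
  case (insert l S)
  define Q where "Q = (\<chi> i. if i = k then b else if i \<in> S then row i A + c$i *s b else row i A)"
  have lk: "l \<noteq> k" using insert by auto
  have "(\<chi> i. if i = k then b else if i \<in> insert l S then row i A + c$i *s b else row i A)
      = (\<chi> r. if r = l then row l Q + c$l *s row k Q else row r Q)"
    using lk insert(2) by (auto simp: Q_def vec_eq_iff row_def)
  then have "det (\<chi> i. if i = k then b else if i \<in> insert l S then row i A + c$i *s b else row i A) = det Q"
    using det_row_operation[OF lk, of Q "c$l"] by simp
  then show ?case using insert Q_def by simp
qed

lemma det_rank1_sum:
  fixes A :: "real^'n^'n"
  assumes "finite S"
  shows "det (\<chi> i. if i \<in> S then row i A + c$i *s b else row i A)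
       = det A + (\<Sum>k\<in>S. c$k * det (\<chi> i. if i = k then b else row i A))"
  using assms
proof (induction S rule: finite_induct)
  case empty
  have "(\<chi> i. row i A) = A" by (simp add: vec_eq_iff row_def)
  then show ?case by simp
next
  case (insert k S)
  define N where "N = (\<lambda>i. if i \<in> S then row i A + c$i *s b else row i A)"
  have e1: "(\<chi> i. if i \<in> insert k S then row i A + c$i *s b else row i A)
      = (\<chi> i. if i = k then row k A + c$k *s b else N i)"
    by (auto simp: N_def vec_eq_iff)
  have e2: "(\<chi> i. if i = k then row k A else N i) = (\<chi> i. N i)"
    using insert(2) by (auto simp: N_def vec_eq_iff)
  have e3: "(\<chi> i. if i = k then b else N i) = (\<chi> i. if i = k then b else if i \<in> S then row i A + c$i *s b else row i A)"
    by (auto simp: N_def vec_eq_iff)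
  have "det (\<chi> i. if i = k then row k A + c$k *s b else N i)
      = det (\<chi> i. if i = k then row k A else N i) + det (\<chi> i. if i = k then c$k *s b else N i)"
    using det_row_add[of k "\<lambda>_. row k A" "\<lambda>_. c$k *s b" N] by simp
  also have "\<dots> = det (\<chi> i. N i) + c$k * det (\<chi> i. if i = k then b else N i)"
    using det_row_mul[of k "c$k" "\<lambda>_. b" N] e2 by simp
  also have "det (\<chi> i. if i = k then b else N i) = det (\<chi> i. if i = k then b else row i A)"
    unfolding e3 by (rule det_rank1_aux[OF insert(1,2)])
  finally show ?case using e1 insert N_def by (simp add: algebra_simps)
qed

lemma det_rank1:
  fixes A :: "real^'n^'n"
  assumes "transpose A *v x = b"
  shows "det (A + outer c b) = det A * (1 + c \<bullet> x)"
proof -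
  have "A + outer c b = (\<chi> i. if i \<in> UNIV then row i A + c$i *s b else row i A)"
    by (simp add: vec_eq_iff outer_def row_def)
  moreover have "det (\<chi> i. if i = k then b else row i A) = x$k * det A" for k
  proof -
    have "(\<chi> i. if i = k then b else row i A) = transpose (\<chi> i j. if j = k then (transpose A *v x)$i else (transpose A)$i$j)"
      using assms by (simp add: vec_eq_iff transpose_def row_def)
    then show ?thesis using cramer_lemma[where A="transpose A" and k=k and x=x] by simp
  qed
  ultimately show ?thesis
    using det_rank1_sum[of UNIV A c b] by (simp add: inner_vec_def sum_distrib_left algebra_simps)
qed


lemma arith_bound:
  fixes g d :: real and n :: nat
  assumes "d = real n" "1 \<le> d" "d < g"
  shows "\<exists>s>0. (1+s)^n < 1 + s*g"
proof -
  define s where "s = (g-d)/(2*g*d)"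
  have gp: "g > 0" using assms by linarith
  have sp: "s > 0" using assms gp by (simp add: s_def field_simps)
  have sd: "s*d = (g-d)/(2*g)" using assms gp by (simp add: s_def field_simps)
  have sd1: "s*d < 1" unfolding sd using gp assms by (simp add: field_simps)
  have "(1+s)^n \<le> exp s ^ n"
    using sp by (intro power_mono) (auto simp: exp_ge_add_one_self add.commute)
  also have "\<dots> = exp (s*d)" using assms(1) by (simp add: exp_of_nat_mult[symmetric] mult.commute)
  finally have e1: "(1+s)^n \<le> exp (s*d)" .
  have "1 - s*d \<le> exp (-(s*d))" using exp_ge_add_one_self[of "-(s*d)"] by simp
  then have "exp (s*d) * (1 - s*d) \<le> exp (s*d) * exp (-(s*d))" by (intro mult_left_mono) auto
  then have e2: "exp (s*d) * (1 - s*d) \<le> 1" by (simp add: exp_minus field_simps)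
  have "(1 + s*g) * (1 - s*d) = 1 + s*(g-d)/2"
  proof -
    have "s * s * g * d = s*(g-d)/2" using gp assms by (simp add: s_def field_simps)
    then show ?thesis by (simp add: algebra_simps field_simps)
  qed
  then have e3: "(1 + s*g) * (1 - s*d) > 1" using sp assms by simp
  have "(1+s)^n * (1 - s*d) < (1 + s*g) * (1 - s*d)"
    using e1 e2 e3 sd1 mult_right_mono[OF e1, of "1 - s*d"] by linarith
  then have "(1+s)^n < 1 + s*g" using sd1 by (simp add: mult_less_cancel_right)
  then show ?thesis using sp by blast
qed

lemma continuous_on_det [continuous_intros]:
  fixes f :: "'a::topological_space \<Rightarrow> real^'n^'n"
  assumes "continuous_on S f"
  shows "continuous_on S (\<lambda>x. det (f x))"
  unfolding det_def
  by (intro continuous_intros continuous_on_component assms)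


lemma g_lower:
  fixes a :: "'i::finite \<Rightarrow> real^'d"
  assumes "is_distribution p"
  shows "ereal (real CARD('d)) \<le> g_value a p"
proof (cases "invertible (info_matrix a p)")
  case False then show ?thesis by (simp add: g_value_def)
next
  case True
  define f where "f i = a i \<bullet> (matrix_inv (info_matrix a p) *v a i)" for i
  have "real CARD('d) = (\<Sum>i\<in>UNIV. p i * f i)"
    using trace_id[OF minv(2)[OF True]] by (simp add: f_def)
  also have "\<dots> \<le> (\<Sum>i\<in>UNIV. p i * Max (range f))"
    using assms unfolding is_distribution_def
    by (intro sum_mono mult_left_mono) auto
  also have "\<dots> = Max (range f)" using assms
    by (simp add: is_distribution_def sum_distrib_right[symmetric])
  finally show ?thesis using True by (simp add: g_value_def f_def)
qed

lemma info_scale_transpose: "transpose (c *\<^sub>R A) = c *\<^sub>R transpose (A::real^'n^'n)"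
  by (simp add: vec_eq_iff transpose_def)

lemma det_scaleR: "det (c *\<^sub>R (A::real^'n^'n)) = c ^ CARD('n) * det A"
proof -
  have "c *\<^sub>R A = (\<chi> i. c *s row i A)" by (simp add: vec_eq_iff row_def)
  moreover have "(\<chi> i. row i A) = A" by (simp add: vec_eq_iff row_def)
  ultimately show ?thesis using det_rows_mul[of "\<lambda>_. c" "\<lambda>i. row i A"] by simp
qed

lemma sum_mix: "(\<Sum>i\<in>UNIV. ((1-t) * q i + t * (if i = i0 then 1 else 0)) * X i) = (1-t) * (\<Sum>i\<in>UNIV. q i * X i) + t * X (i0::'i::finite)" for X :: "'i::finite \<Rightarrow> real"
proof -
  have "(\<Sum>i\<in>UNIV. ((1-t) * q i + t * (if i = i0 then 1 else 0)) * X i) = (\<Sum>i\<in>UNIV. (1-t) * (q i * X i)) + (\<Sum>i\<in>UNIV. if i = i0 then t * X i else 0)"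
    by (subst sum.distrib[symmetric], rule sum.cong, simp, simp add: algebra_simps)
  then show ?thesis by (simp add: sum_distrib_left)
qed

lemma KW:
  fixes a :: "'i::finite \<Rightarrow> real^'d"
  assumes "is_distribution p1" "invertible (info_matrix a p1)"
  shows "\<exists>q. is_distribution q \<and> invertible (info_matrix a q) \<and>
     (\<forall>i. a i \<bullet> (matrix_inv (info_matrix a q) *v a i) \<le> real CARD('d))"
proof -
  define K where "K = {x::real^'i. (\<forall>i. 0 \<le> x$i) \<and> sum (\<lambda>i. x$i) UNIV = 1}"
  define F where "F x = \<bar>det (info_matrix a (\<lambda>i. x$i))\<bar>" for x :: "real^'i"
  have cK: "closed K" unfolding K_def
    by (intro closed_Collect_conj closed_Collect_all closed_Collect_le closed_Collect_eq continuous_intros)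
  have "K \<subseteq> cbox 0 1"
  proof
    fix x assume x: "x \<in> K"
    have "x$i \<le> 1" for i
    proof -
      have "x$i \<le> sum (\<lambda>i. x$i) UNIV" using x unfolding K_def by (intro member_le_sum) auto
      then show ?thesis using x unfolding K_def by simp
    qed
    then show "x \<in> cbox 0 1" using x unfolding K_def by (simp add: mem_box_cart)
  qed
  then have "K = cbox 0 1 \<inter> K" by blast
  then have compK: "compact K" using compact_Int_closed[OF compact_cbox[of 0 1] cK] by simp
  have p1K: "(\<chi> i. p1 i) \<in> K" using assms(1) by (simp add: K_def is_distribution_def)
  have contF: "continuous_on K F" unfolding F_def info_matrix_def
    by (intro continuous_intros)
  obtain xs where xs: "xs \<in> K" "\<And>y. y \<in> K \<Longrightarrow> F y \<le> F xs"
    using continuous_attains_sup[OF compK _ contF] p1K by blast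
  define q where "q i = xs$i" for i
  have qeq: "(\<lambda>i. xs$i) = q" by (simp add: fun_eq_iff q_def)
  define M where "M = info_matrix a q"
  define N where "N = matrix_inv M"
  have qd: "is_distribution q" using xs(1) by (simp add: K_def q_def is_distribution_def)
  have "F (\<chi> i. p1 i) > 0" using assms(2) by (simp add: F_def invertible_det_nz)
  then have "F xs > 0" using xs(2)[OF p1K] by linarith
  then have detM: "det M \<noteq> 0" by (simp add: F_def M_def qeq)
  then have invM: "invertible M" by (simp add: invertible_det_nz)
  have "a i0 \<bullet> (N *v a i0) \<le> real CARD('d)" for i0
  proof (rule ccontr)
    define g where "g = a i0 \<bullet> (N *v a i0)"
    assume "\<not> a i0 \<bullet> (N *v a i0) \<le> real CARD('d)"
    then have gd: "real CARD('d) < g" by (simp add: g_def)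
    obtain s where s: "s > 0" "(1+s)^CARD('d) < 1 + s*g"
      using arith_bound[OF refl _ gd] by auto
    define t where "t = s/(1+s)"
    have t01: "0 < t" "t < 1" using s by (auto simp: t_def field_simps)
    have omt: "1 - t = 1/(1+s)" using s by (simp add: t_def field_simps)
    define y where "y = (\<chi> i. (1-t) * q i + t * (if i = i0 then 1 else 0))"
    have yK: "y \<in> K" using qd t01
      by (auto simp: K_def y_def is_distribution_def sum.distrib sum_distrib_left[symmetric])
    have "info_matrix a (\<lambda>i. y$i) $ k $ l = ((1-t) *\<^sub>R M + outer (t *\<^sub>R a i0) (a i0)) $ k $ l" for k l
      unfolding info_entry y_def vec_lambda_beta sum_mix by (simp add: M_def info_entry outer_def)
    then have infoy: "info_matrix a (\<lambda>i. y$i) = (1-t) *\<^sub>R M + outer (t *\<^sub>R a i0) (a i0)"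
      by (simp add: vec_eq_iff)
    define x where "x = (1/(1-t)) *\<^sub>R (N *v a i0)"
    have MN: "M *v (N *v a i0) = a i0"
      using minv(1)[OF invM] by (simp add: N_def matrix_vector_mul_assoc)
    have tx: "transpose ((1-t) *\<^sub>R M) *v x = a i0"
      using t01 unfolding info_scale_transpose
      by (simp add: M_def info_transpose scaleR_matrix_vector_assoc[symmetric] x_def
            matrix_vector_mult_scaleR MN[unfolded M_def])
    have "det (info_matrix a (\<lambda>i. y$i)) = (1-t)^CARD('d) * det M * (1 + (t/(1-t)) * g)"
      unfolding infoy det_rank1[OF tx] det_scaleR using t01 by (simp add: x_def g_def)
    also have "t/(1-t) = s" using s by (simp add: t_def field_simps)
    finally have dy: "F y = (1/(1+s))^CARD('d) * \<bar>det M\<bar> * (1 + s*g)"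
      using s gd omt by (simp add: F_def abs_mult)
    have "F y \<le> \<bar>det M\<bar>" using xs(2)[OF yK] by (simp add: F_def M_def qeq)
    then have "(1/(1+s))^CARD('d) * (1 + s*g) \<le> 1" using detM unfolding dy
      by (simp add: mult.commute mult.left_commute)
    then have "1 + s*g \<le> (1+s)^CARD('d)" using s by (simp add: field_simps power_divide)
    then show False using s by linarith
  qed
  then show ?thesis using qd invM by (auto simp: M_def N_def)
qed


definition kronM :: "real^'a^'a \<Rightarrow> real^'b^'b \<Rightarrow> real^('a\<times>'b)^('a\<times>'b)" where
  "kronM A B = (\<chi> p q. A$fst p$fst q * B$snd p$snd q)"

lemma sum_pairs: "(\<Sum>r\<in>(UNIV::('a::finite\<times>'b::finite) set). f r) = (\<Sum>r1\<in>UNIV. \<Sum>r2\<in>UNIV. f (r1, r2))"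
  by (simp add: sum.cartesian_product UNIV_Times_UNIV[symmetric] del: UNIV_Times_UNIV)

lemma kronM_mult: "kronM A B ** kronM C D = kronM (A ** C) (B ** D)"
  by (simp add: vec_eq_iff kronM_def matrix_matrix_mult_def sum_pairs sum_product mult_ac)

lemma kronM_one: "kronM (mat 1) (mat 1) = mat 1"
  by (auto simp: vec_eq_iff kronM_def mat_def prod_eq_iff)

lemma kronM_mulv: "kronM A B *v kron x y = kron (A *v x) (B *v y)"
  by (simp add: vec_eq_iff kronM_def kron_def matrix_vector_mult_def sum_pairs sum_product mult_ac)

lemma kron_inner: "kron x y \<bullet> kron z w = (x \<bullet> z) * (y \<bullet> w)"
  by (simp add: kron_def inner_vec_def sum_pairs sum_product mult_ac)

lemma kronM_inv:
  assumes "invertible A" "invertible B"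
  shows "invertible (kronM A B)" "matrix_inv (kronM A B) = kronM (matrix_inv A) (matrix_inv B)"
proof -
  have l: "kronM (matrix_inv A) (matrix_inv B) ** kronM A B = mat 1"
    by (simp add: kronM_mult minv assms kronM_one)
  have r: "kronM A B ** kronM (matrix_inv A) (matrix_inv B) = mat 1"
    by (simp add: kronM_mult minv assms kronM_one)
  show inv: "invertible (kronM A B)" using l r unfolding invertible_def by blast
  have "matrix_inv (kronM A B) = matrix_inv (kronM A B) ** (kronM A B ** kronM (matrix_inv A) (matrix_inv B))"
    by (simp add: r)
  also have "\<dots> = kronM (matrix_inv A) (matrix_inv B)"
    by (simp add: matrix_mul_assoc minv[OF inv])
  finally show "matrix_inv (kronM A B) = kronM (matrix_inv A) (matrix_inv B)" .
qed

lemma info_kron: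
  fixes u :: "'m::finite \<Rightarrow> real^'d1" and v :: "'n::finite \<Rightarrow> real^'d2"
  shows "info_matrix (\<lambda>(i, j). kron (v j) (u i)) (\<lambda>(i, j). \<rho> i * \<zeta> j)
       = kronM (info_matrix v \<zeta>) (info_matrix u \<rho>)"
  by (simp add: vec_eq_iff kronM_def info_entry kron_def sum_pairs sum_product mult_ac sum.swap[of _ "UNIV::'m set"])

lemma singular_of_kernel:
  assumes "\<And>i. a i \<bullet> z = 0" "z \<noteq> 0"
  shows "\<not> invertible (info_matrix a q)"
proof
  assume inv: "invertible (info_matrix a q)"
  have "info_matrix a q *v z = 0" by (simp add: info_mulv assms)
  then have "matrix_inv (info_matrix a q) *v (info_matrix a q *v z) = 0" by simp
  then show False using minv(2)[OF inv] assms(2) by (simp add: matrix_vector_mul_assoc)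
qed

lemma kernel_of_singular:
  fixes a :: "'i::finite \<Rightarrow> real^'d"
  assumes "G_optimal a p" "\<not> invertible (info_matrix a p)"
  shows "\<exists>y. y \<noteq> 0 \<and> (\<forall>i. a i \<bullet> y = 0)"
proof -
  define p0 where "p0 = (\<lambda>i::'i. 1 / real CARD('i))"
  have p0d: "is_distribution p0" by (simp add: is_distribution_def p0_def)
  have "g_value a p = \<infinity>" using assms(2) by (simp add: g_value_def)
  then have "(INF q \<in> {q. is_distribution q}. g_value a q) = \<infinity>"
    using assms(1) by (simp add: G_optimal_def)
  then have "g_value a p0 = \<infinity>" using p0d
    by (metis INF_lower mem_Collect_eq top.extremum_uniqueI top_ereal_def)
  then have ni: "\<not> invertible (info_matrix a p0)" by (auto simp: g_value_def)
  then obtain y where y: "info_matrix a p0 *v y = 0" "y \<noteq> 0"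
    unfolding invertible_left_inverse matrix_left_invertible_ker by blast
  have "(\<Sum>i\<in>UNIV. p0 i * (a i \<bullet> y)^2) = 0" using info_quad[of y a p0] y by simp
  then have "\<forall>i\<in>UNIV. p0 i * (a i \<bullet> y)^2 = 0"
    by (subst sum_nonneg_eq_0_iff[symmetric]) (auto simp: p0_def)
  then have "\<forall>i. a i \<bullet> y = 0" by (simp add: p0_def)
  then show ?thesis using y by blast
qed


lemma g_upper_of_opt:
  fixes a :: "'i::finite \<Rightarrow> real^'d"
  assumes "G_optimal a p" "invertible (info_matrix a p)"
  shows "a i \<bullet> (matrix_inv (info_matrix a p) *v a i) \<le> real CARD('d)"
proof -
  have pd: "is_distribution p" using assms(1) by (simp add: G_optimal_def)
  obtain q where q: "is_distribution q" "invertible (info_matrix a q)"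
    "\<And>i. a i \<bullet> (matrix_inv (info_matrix a q) *v a i) \<le> real CARD('d)"
    using KW[OF pd assms(2)] by blast
  have "g_value a q \<le> ereal (real CARD('d))"
    using q by (simp add: g_value_def)
  moreover have "g_value a p \<le> g_value a q"
    using assms(1) q(1) unfolding G_optimal_def by (metis INF_lower mem_Collect_eq)
  ultimately have "g_value a p \<le> ereal (real CARD('d))" by (rule order.trans[rotated])
  then have "Max (range (\<lambda>i. a i \<bullet> (matrix_inv (info_matrix a p) *v a i))) \<le> real CARD('d)"
    using assms(2) by (simp add: g_value_def)
  then show ?thesis by (meson Max_ge finite UNIV_I image_eqI order.trans finite_imageI)
qed

theorem mainTheorem1:
  fixes U :: "real^'d1^'m" and V :: "real^'d2^'n"
    and \<rho> :: "'m \<Rightarrow> real" and \<zeta> :: "'n \<Rightarrow> real"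
  assumes "G_optimal (\<lambda>i. transpose U *v axis i 1) \<rho>"
    and "G_optimal (\<lambda>j. transpose V *v axis j 1) \<zeta>"
  shows "G_optimal (\<lambda>(i, j). kron (transpose V *v axis j 1) (transpose U *v axis i 1))
           (\<lambda>(i, j). \<rho> i * \<zeta> j)"
proof -
  define u where "u = (\<lambda>i. transpose U *v axis i 1)"
  define v where "v = (\<lambda>j. transpose V *v axis j 1)"
  define c where "c = (\<lambda>(i::'m, j::'n). kron (v j) (u i))"
  define pi where "pi = (\<lambda>(i::'m, j::'n). \<rho> i * \<zeta> j)"
  have ou: "G_optimal u \<rho>" and ov: "G_optimal v \<zeta>" using assms by (simp_all add: u_def v_def)
  have rd: "is_distribution \<rho>" and zd: "is_distribution \<zeta>"
    using ou ov by (simp_all add: G_optimal_def)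
  have pid: "is_distribution pi"
    using rd zd by (auto simp: is_distribution_def pi_def sum_pairs sum_product[symmetric])
  have key: "g_value c pi \<le> g_value c q" if qd: "is_distribution q" for q
  proof (cases "invertible (info_matrix u \<rho>) \<and> invertible (info_matrix v \<zeta>)")
    case True
    let ?Mu = "info_matrix u \<rho>" let ?Mv = "info_matrix v \<zeta>"
    have Mc: "info_matrix c pi = kronM ?Mv ?Mu" unfolding c_def pi_def by (rule info_kron)
    have ic: "invertible (info_matrix c pi)" unfolding Mc using True by (simp add: kronM_inv)
    have "c r \<bullet> (matrix_inv (info_matrix c pi) *v c r) \<le> real CARD('d2 \<times> 'd1)" for r
    proof -
      obtain i j where r: "r = (i, j)" by fastforce
      have "c r \<bullet> (matrix_inv (info_matrix c pi) *v c r)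
          = (v j \<bullet> (matrix_inv ?Mv *v v j)) * (u i \<bullet> (matrix_inv ?Mu *v u i))"
        using True unfolding Mc by (simp add: kronM_inv(2)) (simp add: r c_def kronM_mulv kron_inner)
      also have "\<dots> \<le> real CARD('d2) * real CARD('d1)"
        using True rd zd unfolding is_distribution_def
        by (intro mult_mono g_upper_of_opt[OF ov] g_upper_of_opt[OF ou] inv_quad_nonneg) auto
      finally show ?thesis by simp
    qed
    then have "g_value c pi \<le> ereal (real CARD('d2 \<times> 'd1))"
      using ic by (simp add: g_value_def)
    also have "\<dots> \<le> g_value c q" by (rule g_lower[OF qd])
    finally show ?thesis .
  next
    case False
    have "\<exists>z. z \<noteq> 0 \<and> (\<forall>r. c r \<bullet> z = 0)"
    proof (cases "invertible (info_matrix u \<rho>)")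
      case False
      obtain y where y: "y \<noteq> 0" "\<And>i. u i \<bullet> y = 0" using kernel_of_singular[OF ou False] by blast
      obtain l where l: "y $ l \<noteq> 0" using y(1) by (auto simp: vec_eq_iff)
      define w :: "real^'d2" where "w = axis undefined 1"
      have "kron w y $ (undefined, l) \<noteq> 0" using l by (simp add: kron_def w_def axis_def)
      then have "kron w y \<noteq> 0" by auto
      moreover have "c r \<bullet> kron w y = 0" for r
        by (cases r) (simp add: c_def kron_inner y(2))
      ultimately show ?thesis by blast
    next
      case True
      with False have nv: "\<not> invertible (info_matrix v \<zeta>)" by blast
      obtain y where y: "y \<noteq> 0" "\<And>j. v j \<bullet> y = 0" using kernel_of_singular[OF ov nv] by blast
      obtain l where l: "y $ l \<noteq> 0" using y(1) by (auto simp: vec_eq_iff)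
      define w :: "real^'d1" where "w = axis undefined 1"
      have "kron y w $ (l, undefined) \<noteq> 0" using l by (simp add: kron_def w_def axis_def)
      then have "kron y w \<noteq> 0" by auto
      moreover have "c r \<bullet> kron y w = 0" for r
        by (cases r) (simp add: c_def kron_inner y(2))
      ultimately show ?thesis by blast
    qed
    then obtain z where z: "z \<noteq> 0" "\<And>r. c r \<bullet> z = 0" by blast
    have "g_value c pi = \<infinity>" "g_value c q = \<infinity>"
      using singular_of_kernel[OF z(2) z(1)] by (simp_all add: g_value_def)
    then show ?thesis by simp
  qed
  have "G_optimal c pi"
    unfolding G_optimal_def
  proof (intro conjI pid antisym)
    show "g_value c pi \<le> (INF q \<in> {q. is_distribution q}. g_value c q)"
      using key by (auto intro: INF_greatest)
    show "(INF q \<in> {q. is_distribution q}. g_value c q) \<le> g_value c pi"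
      using pid by (auto intro: INF_lower)
  qed
  then show ?thesis by (simp add: c_def pi_def u_def v_def)
qed

end
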